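(* Let $m\ge1$ and let $\Gamma_C$ be a gate with dangling edges $x_1,\dots,x_m,y_1,\dots,y_m$ consisting of $m$ "lines", where line $\ell$ runs from dangling edge $x_\ell$ to dangling edge $y_\ell$, every two lines cross exactly once, each crossing is a vertex with signature $\mathtt{PASS}$ at which one line uses the north/south edges and the other the west/east edges, and all edge weights are $1$. Then $\mathrm{Sig}(\Gamma_C)(x,y)=C(x,y):=(-1)^{\binom{\mathrm{hw}(x)}{2}}[y=x]$, and the cross cap function $O(x,y):=[y=x]$ satisfies $$O(x,y)=\tfrac{1-\mathrm{i}}{2}\,\mathrm{i}^{\mathrm{hw}(x)}C(x,y)+\tfrac{1+\mathrm{i}}{2}\,(-\mathrm{i})^{\mathrm{hw}(x)}C(x,y)\quad\text{for all }x,y\in\{0,1\}^m,$$ where $\mathrm{i}$ is the imaginary unit.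
   Context: $\mathtt{PASS}(1111)=-1$, $\mathtt{PASS}(0000)=\mathtt{PASS}(0101)=\mathtt{PASS}(1010)=1$, $\mathtt{PASS}=0$ otherwise (bits ordered north, east, south, west). $\mathrm{hw}(x)$ is the Hamming weight. $[\varphi]$ is the Iverson bracket. The signature of a gate $\Gamma$ with dangling edges $D$ is $\mathrm{Sig}(\Gamma,x)=\sum_{y\in\{0,1\}^{E(\Gamma)\setminus D}}w_\Gamma(xy)\prod_v f_v((xy)|_{I(v)})$. *)

theory Defs
  imports Complex_Main
begin

text \<open>Each vertex v carries an
  ordered list of incident edges (for degree-4 vertices: north, east, south, west)
  and a local function f_v; each edge e carries a weight function w_e, and the weight
  of a full assignment is the product of the edge weights.\<close>

record ('v, 'e) gate =
  gV   :: "'v set"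
  gE   :: "'e set"
  ginc :: "'v \<Rightarrow> 'e list"
  gf   :: "'v \<Rightarrow> bool list \<Rightarrow> complex"
  gw   :: "'e \<Rightarrow> bool \<Rightarrow> complex"

text \<open>Signature of a gate with (ordered) dangling edges ds, evaluated at the boundary
  values vs: sum over all assignments of the non-dangling edges (assignments are
  normalised to False outside the edge set).\<close>

definition Sig :: "('v, 'e) gate \<Rightarrow> 'e list \<Rightarrow> bool list \<Rightarrow> complex" where
  "Sig G ds vs =
     (\<Sum>z \<in> {z. (\<forall>i<length ds. z (ds ! i) = vs ! i) \<and> (\<forall>e. e \<notin> gE G \<longrightarrow> z e = False)}.
        (\<Prod>e\<in>gE G. gw G e (z e)) * (\<Prod>v\<in>gV G. gf G v (map z (ginc G v))))"

text \<open>PASS, bits ordered north, east, south, west.\<close>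

definition PASS :: "bool list \<Rightarrow> complex" where
  "PASS bs = (if bs = [True, True, True, True] then -1
              else if bs = [False, False, False, False] \<or> bs = [False, True, False, True]
                      \<or> bs = [True, False, True, False] then 1 else 0)"

definition hw :: "bool list \<Rightarrow> nat" where
  "hw x = length (filter id x)"

definition Cfun :: "bool list \<Rightarrow> bool list \<Rightarrow> complex" where
  "Cfun x y = (-1) ^ (hw x choose 2) * (if y = x then 1 else 0)"

definition Ofun :: "bool list \<Rightarrow> bool list \<Rightarrow> complex" where
  "Ofun x y = (if y = x then 1 else 0)"

text \<open>G is a "crossing gate" of m lines: line l consists of the edges
  seg l 0, ..., seg l (k l) (in order), with x-dangling edge seg l 0 and y-dangling
  edge seg l (k l); consecutive edges seg l j, seg l (j+1) meet at the vertex cv l j.\<close>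

definition crossing_gate ::
  "('v, 'e) gate \<Rightarrow> nat \<Rightarrow> (nat \<Rightarrow> 'e) \<Rightarrow> (nat \<Rightarrow> 'e) \<Rightarrow> bool" where
  "crossing_gate G m xe ye \<longleftrightarrow>
    finite (gV G) \<and> finite (gE G) \<and>
    (\<exists>(seg :: nat \<Rightarrow> nat \<Rightarrow> 'e) (k :: nat \<Rightarrow> nat) (cv :: nat \<Rightarrow> nat \<Rightarrow> 'v).
       (\<forall>l<m. xe l = seg l 0 \<and> ye l = seg l (k l)) \<and>
       gE G = {seg l j | l j. l < m \<and> j \<le> k l} \<and>
       (\<forall>l j l' j'. l < m \<and> j \<le> k l \<and> l' < m \<and> j' \<le> k l' \<and> seg l j = seg l' j'
            \<longrightarrow> l = l' \<and> j = j') \<and>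
       gV G = {cv l j | l j. l < m \<and> j < k l} \<and>
       (\<forall>l j j'. l < m \<and> j < k l \<and> j' < k l \<and> cv l j = cv l j' \<longrightarrow> j = j') \<and>
       (\<forall>l l'. l < m \<and> l' < m \<and> l \<noteq> l' \<longrightarrow>
            (\<exists>!v. (\<exists>j<k l. cv l j = v) \<and> (\<exists>j'<k l'. cv l' j' = v))) \<and>
       (\<forall>v\<in>gV G. card {l. l < m \<and> (\<exists>j<k l. cv l j = v)} = 2) \<and>
       (\<forall>v\<in>gV G. \<exists>l l' j j' n e s w.
            l < m \<and> l' < m \<and> l \<noteq> l' \<and> j < k l \<and> j' < k l' \<and>
            cv l j = v \<and> cv l' j' = v \<and>
            ginc G v = [n, e, s, w] \<and>
            {n, s} = {seg l j, seg l (Suc j)} \<and> {e, w} = {seg l' j', seg l' (Suc j')}) \<and>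
       (\<forall>v\<in>gV G. gf G v = PASS) \<and>
       (\<forall>e\<in>gE G. \<forall>b. gw G e b = 1))"

end

theory Submission
  imports Defs
begin

lemma PASS_nz: "PASS [a,b,c,d] \<noteq> 0 \<Longrightarrow> a = c \<and> b = d"
  by (cases a; cases b; cases c; cases d; simp add: PASS_def)

lemma PASS_abab: "PASS [a,b,a,b] = (if a \<and> b then -1 else 1)"
  by (cases a; cases b; simp add: PASS_def)

lemma choose2_Suc: "(Suc h choose 2) = (h choose 2) + h"
  by (simp add: numeral_2_eq_2)

lemma b_step4: "(-1::complex) ^ ((h+4) choose 2) = (-1) ^ (h choose 2)"
proof -
  have "(h+4) choose 2 = (h choose 2) + 2*(2*h + 3)"
  proof -
    have "h + 4 = Suc (Suc (Suc (Suc h)))" by simp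
    then have "(h+4) choose 2 = (h choose 2) + h + Suc h + Suc (Suc h) + Suc (Suc (Suc h))"
      by (simp only: choose2_Suc)
    then show ?thesis by simp
  qed
  then show ?thesis by (simp add: power_add power_mult)
qed

lemma ab_identity:
  "(1 - \<i>) / 2 * \<i> ^ h + (1 + \<i>) / 2 * (- \<i>) ^ h = (-1::complex) ^ (h choose 2)"
proof (induction h rule: less_induct)
  case (less h)
  show ?case
  proof (cases "h < 4")
    case True
    then have "h = 0 \<or> h = 1 \<or> h = 2 \<or> h = 3" by auto
    then show ?thesis
      by (auto simp: field_simps eval_nat_numeral complex_eq_iff)
  next
    case False
    then obtain g where g: "h = g + 4" by (metis add.commute le_Suc_ex not_less)
    have IH: "(1 - \<i>) / 2 * \<i> ^ g + (1 + \<i>) / 2 * (- \<i>) ^ g = (-1::complex) ^ (g choose 2)"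
      using less g by simp
    have "\<i> ^ h = \<i> ^ g" "(-\<i>)^h = (-\<i>)^g" using g
      by (simp_all add: power_add eval_nat_numeral)
    moreover have "(-1::complex) ^ (h choose 2) = (-1) ^ (g choose 2)"
      unfolding g by (rule b_step4)
    ultimately show ?thesis using IH by (simp only:)
  qed
qed

lemma card2_eq: "card A = 2 \<Longrightarrow> a \<in> A \<Longrightarrow> b \<in> A \<Longrightarrow> a \<noteq> b \<Longrightarrow> A = {a,b}"
proof -
  assume "card A = 2" "a \<in> A" "b \<in> A" "a \<noteq> b"
  then obtain p q where "A = {p,q}" "p \<noteq> q" using card_2_iff[THEN iffD1, OF \<open>card A = 2\<close>] by blast
  then show ?thesis using \<open>a \<in> A\<close> \<open>b \<in> A\<close> \<open>a \<noteq> b\<close> by blast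
qed

lemma prod_sign: "finite A \<Longrightarrow> (\<Prod>v\<in>A. if P v then -1 else (1::complex)) = (-1) ^ card {v\<in>A. P v}"
  by (simp add: prod.If_cases Collect_conj_eq Int_commute)

theorem mainTheorem10:
  fixes G :: "('v, 'e) gate" and m :: nat and xe ye :: "nat \<Rightarrow> 'e"
  assumes "m \<ge> 1"
    and "crossing_gate G m xe ye"
  shows "\<forall>x y. length x = m \<longrightarrow> length y = m \<longrightarrow>
           Sig G (map xe [0..<m] @ map ye [0..<m]) (x @ y) = Cfun x y \<and>
           Ofun x y = (1 - \<i>) / 2 * \<i> ^ hw x * Cfun x y
                    + (1 + \<i>) / 2 * (- \<i>) ^ hw x * Cfun x y"
proof -
  from assms(2) have finV: "finite (gV G)" and finE: "finite (gE G)"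
    unfolding crossing_gate_def by auto
  from assms(2) obtain seg k cv where
    H1: "\<forall>l<m. xe l = seg l 0 \<and> ye l = seg l (k l)" and
    H2: "gE G = {seg l j | l j. l < m \<and> j \<le> k l}" and
    H3: "\<forall>l j l' j'. l < m \<and> j \<le> k l \<and> l' < m \<and> j' \<le> k l' \<and> seg l j = seg l' j' \<longrightarrow> l = l' \<and> j = j'" and
    H4: "gV G = {cv l j | l j. l < m \<and> j < k l}" and
    H5: "\<forall>l j j'. l < m \<and> j < k l \<and> j' < k l \<and> cv l j = cv l j' \<longrightarrow> j = j'" and
    H6: "\<forall>l l'. l < m \<and> l' < m \<and> l \<noteq> l' \<longrightarrow> (\<exists>!v. (\<exists>j<k l. cv l j = v) \<and> (\<exists>j'<k l'. cv l' j' = v))" and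
    H7: "\<forall>v\<in>gV G. card {l. l < m \<and> (\<exists>j<k l. cv l j = v)} = 2" and
    H8: "\<forall>v\<in>gV G. \<exists>l l' j j' n e s w. l < m \<and> l' < m \<and> l \<noteq> l' \<and> j < k l \<and> j' < k l' \<and> cv l j = v \<and> cv l' j' = v \<and> ginc G v = [n, e, s, w] \<and> {n, s} = {seg l j, seg l (Suc j)} \<and> {e, w} = {seg l' j', seg l' (Suc j')}" and
    H9: "\<forall>v\<in>gV G. gf G v = PASS" and
    H10: "\<forall>e\<in>gE G. \<forall>b. gw G e b = 1"
    unfolding crossing_gate_def by (elim conjE exE) (rule that, assumption+)
  define L where "L = (\<lambda>v. {l. l < m \<and> (\<exists>j<k l. cv l j = v)})"
  have LV: "\<exists>l l' j j' n e s w. l < m \<and> l' < m \<and> l \<noteq> l' \<and> j < k l \<and> j' < k l' \<and> L v = {l, l'} \<and>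
      cv l j = v \<and> cv l' j' = v \<and> ginc G v = [n, e, s, w] \<and> {n, s} = {seg l j, seg l (Suc j)}
      \<and> {e, w} = {seg l' j', seg l' (Suc j')}" if vV: "v \<in> gV G" for v
  proof -
    obtain l l' j j' n e s w where W: "l < m \<and> l' < m \<and> l \<noteq> l' \<and> j < k l \<and> j' < k l' \<and> cv l j = v \<and> cv l' j' = v \<and> ginc G v = [n, e, s, w] \<and> {n, s} = {seg l j, seg l (Suc j)} \<and> {e, w} = {seg l' j', seg l' (Suc j')}"
      using H8 vV by blast
    have "l \<in> L v" "l' \<in> L v" using W by (auto simp: L_def)
    moreover have "card (L v) = 2" using H7 vV by (simp add: L_def)
    ultimately have "L v = {l, l'}" using W by (intro card2_eq) auto
    then show ?thesis using W by blast
  qed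
  show ?thesis
  proof (intro allI impI conjI)
    fix x y :: "bool list"
    assume lx: "length x = m" and ly: "length y = m"
    show "Ofun x y = (1 - \<i>) / 2 * \<i> ^ hw x * Cfun x y + (1 + \<i>) / 2 * (- \<i>) ^ hw x * Cfun x y"
    proof (cases "y = x")
      case True
      have "(1 - \<i>) / 2 * \<i> ^ hw x * Cfun x y + (1 + \<i>) / 2 * (- \<i>) ^ hw x * Cfun x y
          = ((1 - \<i>) / 2 * \<i> ^ hw x + (1 + \<i>) / 2 * (- \<i>) ^ hw x) * Cfun x y"
        by (simp add: algebra_simps)
      also have "\<dots> = (-1) ^ (hw x choose 2) * (-1) ^ (hw x choose 2)"
        using True by (simp only: ab_identity Cfun_def) simp
      also have "\<dots> = 1" by (simp add: power_add[symmetric])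
      finally show ?thesis using True by (simp add: Ofun_def)
    next
      case False
      then show ?thesis by (simp add: Ofun_def Cfun_def)
    qed
    define ds where "ds = map xe [0..<m] @ map ye [0..<m]"
    define S where "S = {z. (\<forall>i<length ds. z (ds!i) = (x@y)!i) \<and> (\<forall>e. e \<notin> gE G \<longrightarrow> z e = False)}"
    define F where "F = (\<lambda>z. (\<Prod>e\<in>gE G. gw G e (z e)) * (\<Prod>v\<in>gV G. gf G v (map z (ginc G v))))"
    have Sig_eq: "Sig G ds (x@y) = sum F S" by (simp add: Sig_def S_def F_def)
    have lds: "length ds = 2*m" by (simp add: ds_def)
    have dsl: "ds ! l = xe l" "ds ! (m + l) = ye l" if "l < m" for l
      using that by (simp_all add: ds_def nth_append)
    have xyl: "(x@y) ! l = x ! l" "(x@y) ! (m + l) = y ! l" if "l < m" for l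
      using that lx by (simp_all add: nth_append)
    have Sbd: "z (seg l 0) = x!l \<and> z (seg l (k l)) = y!l" if "z \<in> S" "l < m" for z l
    proof -
      have a: "z (ds ! l) = (x@y) ! l" "z (ds ! (m+l)) = (x@y) ! (m+l)"
        using that lds unfolding S_def by auto
      show ?thesis using a dsl[OF \<open>l<m\<close>] xyl[OF \<open>l<m\<close>] H1 \<open>l<m\<close> by simp
    qed
    have F_eq: "F z = (\<Prod>v\<in>gV G. PASS (map z (ginc G v)))" for z
    proof -
      have "(\<Prod>e\<in>gE G. gw G e (z e)) = 1" by (rule prod.neutral) (simp add: H10)
      moreover have "(\<Prod>v\<in>gV G. gf G v (map z (ginc G v))) = (\<Prod>v\<in>gV G. PASS (map z (ginc G v)))"
        by (rule prod.cong) (simp_all add: H9)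
      ultimately show ?thesis by (simp add: F_def)
    qed
    have step: "z (seg l j) = z (seg l (Suc j))"
      if nz: "(\<Prod>v\<in>gV G. PASS (map z (ginc G v))) \<noteq> 0" and lm: "l < m" and jk: "j < k l" for z l j
    proof -
      have vV: "cv l j \<in> gV G" using H4 lm jk by blast
      have pnz: "PASS (map z (ginc G (cv l j))) \<noteq> 0" using nz finV vV by (auto simp: prod_zero_iff)
      obtain l1 l1' j1 j1' n e s w where W: "l1 < m \<and> l1' < m \<and> l1 \<noteq> l1' \<and> j1 < k l1 \<and> j1' < k l1' \<and> L (cv l j) = {l1, l1'} \<and>
      cv l1 j1 = cv l j \<and> cv l1' j1' = cv l j \<and> ginc G (cv l j) = [n, e, s, w] \<and> {n, s} = {seg l1 j1, seg l1 (Suc j1)}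
      \<and> {e, w} = {seg l1' j1', seg l1' (Suc j1')}" using LV[OF vV] by blast
      have eqs: "z n = z s" "z e = z w" using pnz W PASS_nz by auto
      have "l \<in> L (cv l j)" unfolding L_def using lm jk by blast
      hence "l = l1 \<or> l = l1'" using W by auto
      then show ?thesis
      proof
        assume "l = l1"
        hence "j = j1" using H5[rule_format, of l j j1] W lm jk by simp
        then show ?thesis using \<open>l = l1\<close> W eqs by (auto simp: doubleton_eq_iff)
      next
        assume "l = l1'"
        hence "j = j1'" using H5[rule_format, of l j j1'] W lm jk by simp
        then show ?thesis using \<open>l = l1'\<close> W eqs by (auto simp: doubleton_eq_iff)
      qed
    qed
    have const: "z (seg l j) = z (seg l 0)"
      if nz: "(\<Prod>v\<in>gV G. PASS (map z (ginc G v))) \<noteq> 0" and lm: "l < m" and "j \<le> k l" for z l j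
      using \<open>j \<le> k l\<close>
    proof (induct j)
      case 0 then show ?case by simp
    next
      case (Suc j)
      then show ?case using step[OF nz lm, of j] by simp
    qed
    define z0 where "z0 = (\<lambda>e. \<exists>l<m. \<exists>j\<le>k l. e = seg l j \<and> x!l)"
    have z0seg: "z0 (seg l j) = x!l" if "l < m" "j \<le> k l" for l j
      unfolding z0_def using H3 that by blast
    have nzcase: "x = y \<and> z = z0" if zS: "z \<in> S" and Fnz: "F z \<noteq> 0" for z
    proof -
      have nz: "(\<Prod>v\<in>gV G. PASS (map z (ginc G v))) \<noteq> 0" using Fnz F_eq by simp
      have zl: "z (seg l j) = x ! l" if "l < m" "j \<le> k l" for l j
        using const[OF nz that] Sbd[OF zS \<open>l<m\<close>] by simp
      have xy: "x = y"
      proof (rule nth_equalityI)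
        show "length x = length y" using lx ly by simp
        fix l assume "l < length x"
        then have "l < m" using lx by simp
        then show "x ! l = y ! l" using zl[OF \<open>l<m\<close> order_refl] Sbd[OF zS \<open>l<m\<close>] by simp
      qed
      have "z = z0"
      proof
        fix e
        show "z e = z0 e"
        proof (cases "e \<in> gE G")
          case True
          then obtain l j where "l < m" "j \<le> k l" "e = seg l j" using H2 by blast
          then show ?thesis using zl z0seg by simp
        next
          case False
          then have "z e = False" using zS unfolding S_def by blast
          moreover have "z0 e = False" using False H2 unfolding z0_def by blast
          ultimately show ?thesis by simp
        qed
      qed
      then show ?thesis using xy by simp
    qed
    show "Sig G (map xe [0..<m] @ map ye [0..<m]) (x @ y) = Cfun x y"
    proof (cases "y = x")
      case False
      have "sum F S = 0"
        by (rule sum.neutral) (use nzcase False in blast)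
      then show ?thesis using Sig_eq False by (simp add: ds_def Cfun_def)
    next
      case True
      have z0S: "z0 \<in> S"
        unfolding S_def
      proof (intro CollectI conjI allI impI)
        fix i assume "i < length ds"
        show "z0 (ds ! i) = (x @ y) ! i"
        proof (cases "i < m")
          case True
          then show ?thesis using dsl xyl H1 z0seg by simp
        next
          case False
          then obtain l where l: "i = m + l" "l < m" using \<open>i < length ds\<close> lds
            by (metis add_diff_inverse_nat mult_2 nat_add_left_cancel_less)
          then show ?thesis using dsl xyl H1 z0seg \<open>y = x\<close> by simp
        qed
      next
        fix e assume "e \<notin> gE G"
        then show "z0 e = False" using H2 unfolding z0_def by blast
      qed
      have finS: "finite S"
      proof (rule finite_subset)
        show "S \<subseteq> (\<lambda>A e. e \<in> A) ` Pow (gE G)"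
        proof
          fix z assume "z \<in> S"
          then have "{e. z e} \<subseteq> gE G" unfolding S_def by blast
          moreover have "z = (\<lambda>e. e \<in> {e. z e})" by simp
          ultimately show "z \<in> (\<lambda>A e. e \<in> A) ` Pow (gE G)" by blast
        qed
        show "finite ((\<lambda>A e. e \<in> A) ` Pow (gE G))" using finE by simp
      qed
      have "sum F S = sum F {z0}"
        by (rule sum.mono_neutral_right) (use finS z0S nzcase in auto)
      then have sumF: "sum F S = F z0" by simp
      define T where "T = {l. l < m \<and> x ! l}"
      have pv: "PASS (map z0 (ginc G v)) = (if L v \<subseteq> T then -1 else 1)" if vV: "v \<in> gV G" for v
      proof -
        obtain l l' j j' n e s w where W: "l < m \<and> l' < m \<and> l \<noteq> l' \<and> j < k l \<and> j' < k l' \<and> L v = {l, l'} \<and>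
          cv l j = v \<and> cv l' j' = v \<and> ginc G v = [n, e, s, w] \<and> {n, s} = {seg l j, seg l (Suc j)}
          \<and> {e, w} = {seg l' j', seg l' (Suc j')}" using LV[OF vV] by blast
        have a: "z0 (seg l j) = x!l" "z0 (seg l (Suc j)) = x!l" "z0 (seg l' j') = x!l'" "z0 (seg l' (Suc j')) = x!l'"
          using W z0seg by auto
        have "z0 n = x!l" "z0 s = x!l" "z0 e = x!l'" "z0 w = x!l'"
          using W a by (auto simp: doubleton_eq_iff)
        then have "map z0 (ginc G v) = [x!l, x!l', x!l, x!l']" using W by simp
        moreover have "(L v \<subseteq> T) = (x!l \<and> x!l')" using W by (auto simp: T_def)
        ultimately show ?thesis by (simp add: PASS_abab)
      qed
      have "F z0 = (\<Prod>v\<in>gV G. if L v \<subseteq> T then -1 else 1)"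
        using F_eq pv by simp
      also have "\<dots> = (-1) ^ card {v\<in>gV G. L v \<subseteq> T}" by (rule prod_sign[OF finV])
      finally have Fz0: "F z0 = (-1) ^ card {v\<in>gV G. L v \<subseteq> T}" .
      have bij: "bij_betw L {v\<in>gV G. L v \<subseteq> T} {P. P \<subseteq> T \<and> card P = 2}"
        unfolding bij_betw_def
      proof
        show "inj_on L {v\<in>gV G. L v \<subseteq> T}"
        proof (rule inj_onI)
          fix v w assume v: "v \<in> {v\<in>gV G. L v \<subseteq> T}" and w: "w \<in> {v\<in>gV G. L v \<subseteq> T}" and Lvw: "L v = L w"
          obtain l l' where W: "l < m" "l' < m" "l \<noteq> l'" "L v = {l, l'}" using LV v by blast
          have cv: "(\<exists>j<k l. cv l j = v) \<and> (\<exists>j'<k l'. cv l' j' = v)"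
          proof -
            have "l \<in> L v" "l' \<in> L v" using W by auto
            then show ?thesis unfolding L_def by blast
          qed
          have cw: "(\<exists>j<k l. cv l j = w) \<and> (\<exists>j'<k l'. cv l' j' = w)"
          proof -
            have "l \<in> L w" "l' \<in> L w" using W Lvw by auto
            then show ?thesis unfolding L_def by blast
          qed
          have ex1: "\<exists>!u. (\<exists>j<k l. cv l j = u) \<and> (\<exists>j'<k l'. cv l' j' = u)"
            using H6 W(1-3) by blast
          show "v = w" using ex1 cv cw by blast
        qed
        show "L ` {v\<in>gV G. L v \<subseteq> T} = {P. P \<subseteq> T \<and> card P = 2}"
        proof
          show "L ` {v\<in>gV G. L v \<subseteq> T} \<subseteq> {P. P \<subseteq> T \<and> card P = 2}"
          proof
            fix P assume "P \<in> L ` {v\<in>gV G. L v \<subseteq> T}"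
            then obtain v where "v \<in> gV G" "L v \<subseteq> T" "P = L v" by blast
            then show "P \<in> {P. P \<subseteq> T \<and> card P = 2}" using H7 unfolding L_def by simp
          qed
          show "{P. P \<subseteq> T \<and> card P = 2} \<subseteq> L ` {v\<in>gV G. L v \<subseteq> T}"
          proof
            fix P assume "P \<in> {P. P \<subseteq> T \<and> card P = 2}"
            then have PT: "P \<subseteq> T" and cP: "card P = 2" by auto
            obtain a b where ab: "P = {a, b}" "a \<noteq> b" using cP[unfolded card_2_iff] by blast
            have am: "a < m" "b < m" using PT ab T_def by auto
            obtain u where u: "(\<exists>j<k a. cv a j = u) \<and> (\<exists>j'<k b. cv b j' = u)"
              using ex1_implies_ex[OF H6[rule_format, of a b]] am ab by blast
            have uV: "u \<in> gV G" unfolding H4 using u am by blast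
            have aL: "a \<in> L u" and bL: "b \<in> L u" using u am unfolding L_def by auto
            have cL: "card (L u) = 2" using H7 uV unfolding L_def by blast
            have "L u = P" using ab(1) card2_eq[OF cL aL bL ab(2)] by simp
            then show "P \<in> L ` {v\<in>gV G. L v \<subseteq> T}" using uV PT by blast
          qed
        qed
      qed
      have "card {v\<in>gV G. L v \<subseteq> T} = card {P. P \<subseteq> T \<and> card P = 2}"
        using bij_betw_same_card[OF bij] .
      also have "\<dots> = card T choose 2"
        by (rule n_subsets) (simp add: T_def)
      also have "card T = hw x"
        unfolding hw_def T_def using lx by (simp add: length_filter_conv_card)
      finally have "card {v\<in>gV G. L v \<subseteq> T} = hw x choose 2" .
      then have "Sig G ds (x@y) = (-1) ^ (hw x choose 2)" using Sig_eq sumF Fz0 by simp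
      then show ?thesis using True unfolding ds_def Cfun_def by simp
    qed
  qed
qed

end
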